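(* Let $n\in\mathbb{N}_0$ and $v\in\mathbb{P}_n([0,1])$. For each $\mathrm{Z}\in\{\mathrm{I},\mathrm{II},\mathrm{III}\}$ there exists a unique $u^{\mathrm{Z}}\in\mathbb{P}^\perp_{n,n-1}(\widehat T)$ with $v=\gamma^{\mathrm{Z}}u^{\mathrm{Z}}$. Consequently the linear extension operator $\mathcal{E}^{\mathrm{Z}}:\mathbb{P}_n([0,1])\to\mathbb{P}^\perp_{n,n-1}(\widehat T)$, $\mathcal{E}^{\mathrm{Z}}v:=u^{\mathrm{Z}}$, is well defined.
   Context: $\widehat T$ is the triangle with vertices $(0,0),(1,0),(0,1)$. $\mathbb{P}^\perp_{0,-1}(\widehat T)=\mathbb{P}_0(\widehat T)$, and for $n\ge1$, $\mathbb{P}^\perp_{n,n-1}(\widehat T):=\{u\in\mathbb{P}_n(\widehat T):\int_{\widehat T}uv=0\ \forall v\in\mathbb{P}_{n-1}(\widehat T)\}$, where $\mathbb{P}_m$ denotes polynomials of total degree $\le m$. Restriction operators: $\gamma^{\mathrm{I}}u:=u(\cdot,0)$, $\gamma^{\mathrm{II}}u:=u(0,\cdot)$, $\gamma^{\mathrm{III}}u:=u(1-\cdot,\cdot)$ (functions on $[0,1]$). *)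

theory Defs
  imports "HOL-Analysis.Analysis"
begin

text \<open>Univariate polynomials of degree at most n (as real functions; restricted to [0,1] in use).\<close>
definition polys1 :: "nat \<Rightarrow> (real \<Rightarrow> real) set" where
  "polys1 n = {v. \<exists>a :: nat \<Rightarrow> real. \<forall>t. v t = (\<Sum>k\<le>n. a k * t ^ k)}"

definition polys2 :: "nat \<Rightarrow> (real \<times> real \<Rightarrow> real) set" where
  "polys2 n = {u. \<exists>c :: nat \<Rightarrow> nat \<Rightarrow> real.
      \<forall>x y. u (x, y) = (\<Sum>i\<le>n. \<Sum>j\<le>n - i. c i j * x ^ i * y ^ j)}"

definition Tref :: "(real \<times> real) set" where
  "Tref = {p. 0 \<le> fst p \<and> 0 \<le> snd p \<and> fst p + snd p \<le> 1}"

definition orth_polys :: "nat \<Rightarrow> (real \<times> real \<Rightarrow> real) set" where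
  "orth_polys n = (if n = 0 then polys2 0 else
     {u \<in> polys2 n. \<forall>w \<in> polys2 (n - 1). integral Tref (\<lambda>p. u p * w p) = 0})"

datatype edge = EI | EII | EIII

fun restr :: "edge \<Rightarrow> (real \<times> real \<Rightarrow> real) \<Rightarrow> real \<Rightarrow> real" where
  "restr EI u t = u (t, 0)"
| "restr EII u t = u (0, t)"
| "restr EIII u t = u (1 - t, t)"

end

theory Submission imports Defs begin


definition Dn :: "nat \<Rightarrow> (nat \<times> nat) set" where
  "Dn n = {p. fst p + snd p \<le> n}"

definition mon :: "nat \<times> nat \<Rightarrow> real \<times> real \<Rightarrow> real" where
  "mon p z = fst z ^ fst p * snd z ^ snd p"

definition PP :: "nat \<Rightarrow> (real \<times> real \<Rightarrow> real) set" where
  "PP n = {u. \<exists>c. \<forall>z. u z = (\<Sum>p\<in>Dn n. c p * mon p z)}"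

lemma Dn_Sigma: "Dn n = Sigma {..n} (\<lambda>i. {..n-i})"
  by (auto simp: Dn_def)

lemma finite_Dn[simp]: "finite (Dn n)"
  by (simp add: Dn_Sigma)

lemma polys2_PP: "polys2 n = PP n"
proof -
  have key: "(\<Sum>i\<le>n. \<Sum>j\<le>n - i. c i j * x ^ i * y ^ j) = (\<Sum>p\<in>Dn n. c (fst p) (snd p) * mon p (x,y))"
    for c and x y :: real
    unfolding Dn_Sigma mon_def
    by (subst sum.Sigma) (auto simp: case_prod_beta mult.assoc)
  show ?thesis
  proof
    show "polys2 n \<subseteq> PP n"
      unfolding polys2_def PP_def
    proof clarify
      fix u :: "real \<times> real \<Rightarrow> real" and c assume h: "\<forall>x y. u (x, y) = (\<Sum>i\<le>n. \<Sum>j\<le>n - i. c i j * x ^ i * y ^ j)"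
      show "\<exists>c. \<forall>z. u z = (\<Sum>p\<in>Dn n. c p * mon p z)"
        by (rule exI[of _ "\<lambda>p. c (fst p) (snd p)"]) (auto simp: h key)
    qed
    show "PP n \<subseteq> polys2 n"
      unfolding polys2_def PP_def
    proof clarify
      fix u :: "real \<times> real \<Rightarrow> real" and c assume h: "\<forall>z. u z = (\<Sum>p\<in>Dn n. c p * mon p z)"
      show "\<exists>c. \<forall>x y. u (x, y) = (\<Sum>i\<le>n. \<Sum>j\<le>n - i. c i j * x ^ i * y ^ j)"
        by (rule exI[of _ "\<lambda>i j. c (i,j)"]) (auto simp: h key)
    qed
  qed
qed

lemma PP_lin:
  assumes "u \<in> PP n" "v \<in> PP n"
  shows "(\<lambda>z. a * u z + b * v z) \<in> PP n"
proof -
  obtain c d where c: "\<And>z. u z = (\<Sum>p\<in>Dn n. c p * mon p z)"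
    and d: "\<And>z. v z = (\<Sum>p\<in>Dn n. d p * mon p z)" using assms unfolding PP_def by blast
  show ?thesis unfolding PP_def
    by (rule CollectI, rule exI[of _ "\<lambda>p. a * c p + b * d p"])
      (simp add: c d sum_distrib_left sum.distrib algebra_simps)
qed

lemma PP_mono:
  assumes "u \<in> PP m" "m \<le> n"
  shows "u \<in> PP n"
proof -
  obtain c where c: "\<And>z. u z = (\<Sum>p\<in>Dn m. c p * mon p z)"
    using assms unfolding PP_def by blast
  have sub: "Dn m \<subseteq> Dn n" using assms(2) by (auto simp: Dn_def)
  have "(\<Sum>p\<in>Dn n. (if p \<in> Dn m then c p else 0) * mon p z) = (\<Sum>p\<in>Dn m. c p * mon p z)" for z
    by (rule sum.mono_neutral_cong_right) (use sub in auto)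
  then show ?thesis unfolding PP_def
    by (intro CollectI exI[of _ "\<lambda>p. if p \<in> Dn m then c p else 0"]) (simp add: c)
qed

lemma PP_const: "(\<lambda>z. a) \<in> PP n"
proof -
  have "(\<Sum>p\<in>Dn n. (if p = (0,0) then a else 0) * mon p z) = (\<Sum>p\<in>Dn n. if p = (0,0) then a * mon p z else 0)" for z
    by (rule sum.cong) auto
  then have "(\<Sum>p\<in>Dn n. (if p = (0,0) then a else 0) * mon p z) = a" for z
    by (subst (asm) sum.delta, simp) (auto simp: Dn_def mon_def)
  then show ?thesis unfolding PP_def
    by (intro CollectI exI[of _ "\<lambda>p. if p = (0,0) then a else 0"]) simp
qed

lemma PP_mon: "mon p \<in> PP (fst p + snd p)"
proof -
  have "(\<Sum>q\<in>Dn (fst p + snd p). (if q = p then 1 else 0) * mon q z) = (\<Sum>q\<in>Dn (fst p + snd p). if q = p then mon q z else 0)" for z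
    by (rule sum.cong) auto
  then have "(\<Sum>q\<in>Dn (fst p + snd p). (if q = p then 1 else 0) * mon q z) = mon p z" for z
    by (subst (asm) sum.delta, simp) (auto simp: Dn_def)
  then show ?thesis unfolding PP_def
    by (intro CollectI exI[of _ "\<lambda>q. if q = p then 1 else 0"]) simp
qed

lemma PP_fst: "fst \<in> PP 1"
  using PP_mon[of "(1,0)"] by (simp add: mon_def[abs_def])

lemma PP_snd: "snd \<in> PP 1"
  using PP_mon[of "(0,1)"] by (simp add: mon_def[abs_def])

definition padd :: "nat \<times> nat \<Rightarrow> nat \<times> nat \<Rightarrow> nat \<times> nat" where
  "padd p q = (fst p + fst q, snd p + snd q)"

lemma mon_padd: "mon (padd p q) z = mon p z * mon q z"
  by (simp add: mon_def padd_def power_add)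

lemma PP_mult:
  assumes "u \<in> PP m" "v \<in> PP k"
  shows "(\<lambda>z. u z * v z) \<in> PP (m + k)"
proof -
  obtain c d where c: "\<And>z. u z = (\<Sum>p\<in>Dn m. c p * mon p z)"
    and d: "\<And>z. v z = (\<Sum>p\<in>Dn k. d p * mon p z)" using assms unfolding PP_def by blast
  let ?S = "Dn m \<times> Dn k"
  let ?g = "\<lambda>pq. padd (fst pq) (snd pq)"
  let ?h = "\<lambda>pq z. c (fst pq) * d (snd pq) * mon (?g pq) z"
  define e where "e r = (\<Sum>pq\<in>{x \<in> ?S. ?g x = r}. c (fst pq) * d (snd pq))" for r
  have img: "?g ` ?S \<subseteq> Dn (m+k)" by (auto simp: Dn_def padd_def)
  have "u z * v z = (\<Sum>r\<in>Dn (m+k). e r * mon r z)" for z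
  proof -
    have "u z * v z = (\<Sum>p\<in>Dn m. \<Sum>q\<in>Dn k. c p * mon p z * (d q * mon q z))"
      by (simp add: c d sum_product)
    also have "\<dots> = (\<Sum>pq\<in>?S. ?h pq z)"
      by (subst sum.cartesian_product) (simp add: case_prod_beta mon_padd algebra_simps)
    also have "\<dots> = (\<Sum>r\<in>Dn (m+k). \<Sum>pq\<in>{x \<in> ?S. ?g x = r}. ?h pq z)"
      by (rule sum.group[symmetric]) (use img in auto)
    also have "\<dots> = (\<Sum>r\<in>Dn (m+k). e r * mon r z)"
      unfolding e_def sum_distrib_right by (intro sum.cong refl) auto
    finally show ?thesis .
  qed
  then show ?thesis unfolding PP_def by blast
qed

lemma PP_sum:
  assumes "finite A" "\<And>a. a \<in> A \<Longrightarrow> f a \<in> PP n"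
  shows "(\<lambda>z. \<Sum>a\<in>A. f a z) \<in> PP n"
  using assms
proof (induction A rule: finite_induct)
  case empty
  then show ?case using PP_const[of 0 n] by simp
next
  case (insert x F)
  then show ?case using PP_lin[of "f x" n "\<lambda>z. \<Sum>a\<in>F. f a z" 1 1] by simp
qed

lemma PP_pow:
  assumes "u \<in> PP m"
  shows "(\<lambda>z. u z ^ k) \<in> PP (m * k)"
proof (induction k)
  case 0
  then show ?case using PP_const[of 1] by simp
next
  case (Suc k)
  then show ?case using PP_mult[OF assms Suc] by (simp add: add.commute)
qed

lemma PP_subst:
  assumes "u \<in> PP n" "f \<in> PP 1" "g \<in> PP 1"
  shows "(\<lambda>z. u (f z, g z)) \<in> PP n"
proof -
  obtain c where c: "\<And>z. u z = (\<Sum>p\<in>Dn n. c p * mon p z)"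
    using assms unfolding PP_def by blast
  have "(\<lambda>z. \<Sum>p\<in>Dn n. c p * (f z ^ fst p * g z ^ snd p)) \<in> PP n"
  proof (rule PP_sum)
    fix p assume p: "p \<in> Dn n"
    have "(\<lambda>z. f z ^ fst p * g z ^ snd p) \<in> PP (1 * fst p + 1 * snd p)"
      by (rule PP_mult[OF PP_pow[OF assms(2)] PP_pow[OF assms(3)]])
    then have "(\<lambda>z. f z ^ fst p * g z ^ snd p) \<in> PP n"
      by (rule PP_mono) (use p in \<open>auto simp: Dn_def\<close>)
    then show "(\<lambda>z. c p * (f z ^ fst p * g z ^ snd p)) \<in> PP n"
      using PP_lin[of _ n "\<lambda>z. 0" "c p" 0] PP_const by auto
  qed auto
  then show ?thesis by (simp add: c mon_def)
qed

lemma PP_cont: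
  assumes "u \<in> PP n"
  shows "continuous_on S u"
proof -
  obtain c where c: "\<And>z. u z = (\<Sum>p\<in>Dn n. c p * mon p z)"
    using assms unfolding PP_def by blast
  have "u = (\<lambda>z. \<Sum>p\<in>Dn n. c p * mon p z)" using c by auto
  then show ?thesis unfolding mon_def by (auto intro!: continuous_intros)
qed



lemma PP_nested:
  assumes "u \<in> PP n"
  obtains c where "\<And>x y. u (x, y) = (\<Sum>i\<le>n. (\<Sum>j\<le>n - i. c i j * y ^ j) * x ^ i)"
proof -
  from assms obtain c where c: "\<And>x y. u (x, y) = (\<Sum>i\<le>n. \<Sum>j\<le>n - i. c i j * x ^ i * y ^ j)"
    unfolding polys2_PP[symmetric] polys2_def by blast
  show ?thesis
    by (rule that[of c]) (simp add: c sum_distrib_right sum_distrib_left algebra_simps)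
qed

lemma PP_nested2:
  assumes "u \<in> PP n"
  obtains c where "\<And>x y. u (x, y) = (\<Sum>i\<le>n. (\<Sum>j\<le>n - i. c i j * y ^ j) * x ^ i)"
    "\<And>x y. u (x, y) = (\<Sum>i\<le>n. \<Sum>j\<le>n - i. c i j * x ^ i * y ^ j)"
proof -
  from assms obtain c where c: "\<And>x y. u (x, y) = (\<Sum>i\<le>n. \<Sum>j\<le>n - i. c i j * x ^ i * y ^ j)"
    unfolding polys2_PP[symmetric] polys2_def by blast
  show ?thesis
    by (rule that[of c]) (simp_all add: c sum_distrib_right sum_distrib_left algebra_simps)
qed

lemma poly_zero_on_infinite:
  fixes a :: "nat \<Rightarrow> real"
  assumes "infinite S" "\<And>t. t \<in> S \<Longrightarrow> (\<Sum>i\<le>n. a i * t ^ i) = 0"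
  shows "\<forall>i\<le>n. a i = 0"
proof -
  have "S \<subseteq> {t. (\<Sum>i\<le>n. a i * t ^ i) = 0}" using assms(2) by auto
  then have "infinite {t. (\<Sum>i\<le>n. a i * t ^ i) = 0}" using assms(1) finite_subset by blast
  then show ?thesis using polyfun_finite_roots[of a n] by auto
qed

lemma PP_edge_zero:
  assumes "u \<in> PP n" "\<And>t. t \<in> {0..1} \<Longrightarrow> u (t, 0) = 0"
  shows "u (t, 0) = 0"
proof -
  obtain c where c: "\<And>x y. u (x, y) = (\<Sum>i\<le>n. (\<Sum>j\<le>n - i. c i j * y ^ j) * x ^ i)"
    using PP_nested[OF assms(1)] by blast
  have "\<forall>i\<le>n. (\<Sum>j\<le>n - i. c i j * 0 ^ j) = 0"
    by (rule poly_zero_on_infinite[of "{0..1}"]) (use assms(2) c in auto)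
  then show ?thesis by (simp add: c)
qed

lemma PP_box_zero:
  assumes "u \<in> PP n" "\<And>x y. 0 < x \<Longrightarrow> x < 1/2 \<Longrightarrow> 0 < y \<Longrightarrow> y < 1/2 \<Longrightarrow> u (x, y) = 0"
  shows "u z = 0"
proof -
  obtain c where c: "\<And>x y. u (x, y) = (\<Sum>i\<le>n. (\<Sum>j\<le>n - i. c i j * y ^ j) * x ^ i)"
      "\<And>x y. u (x, y) = (\<Sum>i\<le>n. \<Sum>j\<le>n - i. c i j * x ^ i * y ^ j)"
    using PP_nested2[OF assms(1)] by blast
  have inf: "infinite {0<..<(1/2::real)}" by simp
  have A: "\<forall>i\<le>n. (\<Sum>j\<le>n - i. c i j * y ^ j) = 0" if y: "0 < y" "y < 1/2" for y
    by (rule poly_zero_on_infinite[OF inf]) (use assms(2) c y in auto)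
  have B: "c i j = 0" if "i \<le> n" "j \<le> n - i" for i j
  proof -
    have "\<forall>j\<le>n - i. c i j = 0"
      by (rule poly_zero_on_infinite[OF inf]) (use A that in \<open>auto simp: mult.commute\<close>)
    then show ?thesis using that by auto
  qed
  obtain x y where "z = (x, y)" by fastforce
  then show ?thesis by (simp add: c(2) B)
qed

lemma Tref_compact: "compact Tref"
proof -
  have "closed Tref" unfolding Tref_def
    by (intro closed_Collect_conj closed_Collect_le continuous_intros)
  moreover have "Tref \<subseteq> cbox (0,0) (1,1)"
    by (auto simp: Tref_def cbox_Pair_eq)
  then have "bounded Tref" using bounded_cbox bounded_subset by blast
  ultimately show ?thesis using compact_eq_bounded_closed by blast
qed

lemma int_Tref:
  fixes f :: "real \<times> real \<Rightarrow> real"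
  assumes "continuous_on Tref f"
  shows "f integrable_on Tref"
  using set_borel_integral_eq_integral(1)[of Tref f] borel_integrable_compact[OF Tref_compact assms]
  by (simp add: set_integrable_def)

lemma box_sub_Tref: "cbox (0,0) (1/2,1/2) \<subseteq> Tref"
  by (auto simp: Tref_def cbox_Pair_eq)

lemma pos_zero:
  fixes f :: "real \<times> real \<Rightarrow> real"
  assumes cont: "continuous_on UNIV f" and nn: "\<And>z. z \<in> Tref \<Longrightarrow> 0 \<le> f z"
    and i0: "integral Tref f = 0"
    and x: "0 < x" "x < 1/2" "0 < y" "y < 1/2"
  shows "f (x, y) = 0"
proof -
  let ?B = "cbox (0::real,0::real) (1/2,1/2)"
  have iB: "f integrable_on ?B" using integrable_continuous continuous_on_subset[OF cont] by blast
  have iT: "f integrable_on Tref" using int_Tref continuous_on_subset[OF cont] by blast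
  have "integral ?B f \<le> integral Tref f"
    by (rule integral_subset_le[OF box_sub_Tref iB iT]) (use nn in auto)
  moreover have "0 \<le> integral ?B f"
    by (rule integral_nonneg[OF iB]) (use nn box_sub_Tref in auto)
  ultimately have "integral ?B f = 0" using i0 by linarith
  then have hi: "(f has_integral 0) ?B" using iB by (metis has_integral_integral)
  show ?thesis
  proof (rule has_integral_0_cbox_imp_0[OF continuous_on_subset[OF cont] _ hi])
    show "\<And>z. z \<in> box (0,0) (1/2,1/2) \<Longrightarrow> 0 \<le> f z"
      using nn box_sub_Tref box_subset_cbox by blast
    show "box (0::real,0::real) (1/2,1/2) \<noteq> {}" by (auto simp: box_ne_empty Basis_prod_def)
    show "(x,y) \<in> ?B" using x by (auto simp: cbox_Pair_eq)
  qed auto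
qed



fun lspan :: "('x \<Rightarrow> real) list \<Rightarrow> ('x \<Rightarrow> real) set" where
  "lspan [] = {\<lambda>z. 0}"
| "lspan (w # ws) = {\<lambda>z. t * w z + s z | t s. s \<in> lspan ws}"

lemma lspan_lin:
  assumes "g \<in> lspan ws" "h \<in> lspan ws"
  shows "(\<lambda>z. \<alpha> * g z + \<beta> * h z) \<in> lspan ws"
  using assms
proof (induction ws arbitrary: g h)
  case Nil
  then show ?case by simp
next
  case (Cons w ws)
  from Cons.prems obtain t s t' s' where g: "g = (\<lambda>z. t * w z + s z)" "s \<in> lspan ws"
    and h: "h = (\<lambda>z. t' * w z + s' z)" "s' \<in> lspan ws" by auto
  have "(\<lambda>z. \<alpha> * s z + \<beta> * s' z) \<in> lspan ws" using Cons.IH g h by blast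
  moreover have "(\<lambda>z. \<alpha> * g z + \<beta> * h z) = (\<lambda>z. (\<alpha> * t + \<beta> * t') * w z + (\<alpha> * s z + \<beta> * s' z))"
    by (auto simp: g h algebra_simps)
  ultimately show ?case by auto
qed

lemma lspan_sub:
  assumes "(\<lambda>z. 0) \<in> V" "\<And>g h \<alpha> \<beta>. g\<in>V \<Longrightarrow> h\<in>V \<Longrightarrow> (\<lambda>z. \<alpha> * g z + \<beta> * h z) \<in> V"
  shows "set ws \<subseteq> V \<Longrightarrow> lspan ws \<subseteq> V"
proof (induction ws)
  case Nil
  then show ?case using assms by simp
next
  case (Cons w ws)
  show ?case
  proof
    fix x assume "x \<in> lspan (w # ws)"
    then obtain t s where "x = (\<lambda>z. t * w z + s z)" "s \<in> lspan ws" by auto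
    then show "x \<in> V" using Cons assms(2)[of w s t 1] by auto
  qed
qed

lemma riesz:
  fixes a :: "('x\<Rightarrow>real) \<Rightarrow> ('x\<Rightarrow>real) \<Rightarrow> real"
  assumes V0: "(\<lambda>z. 0) \<in> V"
    and Vlin: "\<And>g h \<alpha> \<beta>. g\<in>V \<Longrightarrow> h\<in>V \<Longrightarrow> (\<lambda>z. \<alpha> * g z + \<beta> * h z) \<in> V"
    and alin: "\<And>g h k \<alpha> \<beta>. g\<in>V \<Longrightarrow> h\<in>V \<Longrightarrow> k\<in>V \<Longrightarrow> a (\<lambda>z. \<alpha> * g z + \<beta> * h z) k = \<alpha> * a g k + \<beta> * a h k"
    and asym: "\<And>g k. g\<in>V \<Longrightarrow> k\<in>V \<Longrightarrow> a g k = a k g"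
    and apos: "\<And>g. g\<in>V \<Longrightarrow> a g g = 0 \<Longrightarrow> g = (\<lambda>z. 0)"
  shows "set ws \<subseteq> V \<Longrightarrow> (\<And>g h \<alpha> \<beta>. g\<in>V \<Longrightarrow> h\<in>V \<Longrightarrow> f (\<lambda>z. \<alpha> * g z + \<beta> * h z) = \<alpha> * f g + \<beta> * f h)
     \<Longrightarrow> \<exists>q\<in>lspan ws. \<forall>w\<in>lspan ws. a q w = f w"
proof (induction ws arbitrary: f)
  case Nil
  have "f (\<lambda>z. 0) = 0" using Nil(2)[OF V0 V0, of 0 0] by simp
  moreover have "a (\<lambda>z. 0) (\<lambda>z. 0) = 0" using alin[OF V0 V0 V0, of 0 0] by simp
  ultimately show ?case by simp
next
  case (Cons w ws)
  have wV: "w \<in> V" and wsV: "set ws \<subseteq> V" using Cons.prems by auto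
  have WV: "lspan ws \<subseteq> V" using lspan_sub[OF V0 Vlin wsV] by blast
  have flin: "\<And>g h \<alpha> \<beta>. g\<in>V \<Longrightarrow> h\<in>V \<Longrightarrow> f (\<lambda>z. \<alpha> * g z + \<beta> * h z) = \<alpha> * f g + \<beta> * f h"
    by (rule Cons.prems(2))
  have alin2: "a k (\<lambda>z. \<alpha> * g z + \<beta> * h z) = \<alpha> * a k g + \<beta> * a k h"
    if "g\<in>V" "h\<in>V" "k\<in>V" for g h k \<alpha> \<beta>
    using alin[OF that] asym that Vlin[OF that(1,2)] by metis
  have "\<exists>q\<in>lspan ws. \<forall>s\<in>lspan ws. a q s = a w s"
  proof (rule Cons.IH[OF wsV])
    fix g h \<alpha> \<beta> assume "g \<in> V" "h \<in> V"
    then show "a w (\<lambda>z. \<alpha> * g z + \<beta> * h z) = \<alpha> * a w g + \<beta> * a w h"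
      using alin2 wV by blast
  qed
  then obtain r where r: "r \<in> lspan ws" "\<forall>s\<in>lspan ws. a r s = a w s" by blast
  have "\<exists>q\<in>lspan ws. \<forall>s\<in>lspan ws. a q s = f s"
  proof (rule Cons.IH[OF wsV])
    fix g h \<alpha> \<beta> assume "g \<in> V" "h \<in> V"
    then show "f (\<lambda>z. \<alpha> * g z + \<beta> * h z) = \<alpha> * f g + \<beta> * f h"
      by (rule flin)
  qed
  then obtain q' where q': "q' \<in> lspan ws" "\<forall>s\<in>lspan ws. a q' s = f s" by blast
  have rV: "r \<in> V" and q'V: "q' \<in> V" using r q' WV by auto
  define e where "e = (\<lambda>z. 1 * w z + (-1) * r z)"
  have eV: "e \<in> V" unfolding e_def by (rule Vlin[OF wV rV])
  have ae: "a e s = 0" if "s \<in> lspan ws" for s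
    using alin[OF wV rV, of s 1 "-1"] r(2) that WV unfolding e_def by auto
  have w_eq: "w = (\<lambda>z. 1 * e z + 1 * r z)" by (auto simp: e_def)
  show ?case
  proof (cases "a e e = 0")
    case True
    then have "e = (\<lambda>z. 0)" using apos eV by blast
    then have wr: "w = r" using w_eq by auto
    have "q' \<in> lspan (w # ws)" using q'(1) by (auto intro!: exI[of _ 0])
    moreover have "a q' x = f x" if xin: "x \<in> lspan (w # ws)" for x
    proof -
      obtain t s where x0: "x = (\<lambda>z. t * w z + s z)" "s \<in> lspan ws"
        using xin by auto
      then have x: "x = (\<lambda>z. t * r z + 1 * s z)" "s \<in> lspan ws" using wr by auto
      have sV: "s \<in> V" using x WV by auto
      have "a q' x = t * a q' r + 1 * a q' s" unfolding x(1) by (rule alin2[OF rV sV q'V])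
      also have "\<dots> = t * f r + 1 * f s" using q'(2) r(1) x(2) by simp
      also have "\<dots> = f x" unfolding x(1) by (rule flin[symmetric, OF rV sV])
      finally show ?thesis .
    qed
    ultimately show ?thesis by blast
  next
    case False
    define \<tau> where "\<tau> = (f e - a q' e) / a e e"
    define q where "q = (\<lambda>z. 1 * q' z + \<tau> * e z)"
    have qV: "q \<in> V" unfolding q_def by (rule Vlin[OF q'V eV])
    have "(\<lambda>z. 1 * q' z + (-\<tau>) * r z) \<in> lspan ws" by (rule lspan_lin[OF q'(1) r(1)])
    moreover have "q = (\<lambda>z. \<tau> * w z + (1 * q' z + (-\<tau>) * r z))" by (auto simp: q_def e_def algebra_simps)
    ultimately have qin: "q \<in> lspan (w # ws)" by auto
    have aqs: "a q s = f s" if "s \<in> lspan ws" for s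
    proof -
      have "a q s = 1 * a q' s + \<tau> * a e s" unfolding q_def by (rule alin[OF q'V eV]) (use that WV in auto)
      then show ?thesis using that q'(2) ae by simp
    qed
    have aqe: "a q e = f e"
    proof -
      have "a q e = 1 * a q' e + \<tau> * a e e" unfolding q_def by (rule alin[OF q'V eV eV])
      then show ?thesis using False by (simp add: \<tau>_def)
    qed
    have aqw: "a q w = f w"
    proof -
      have "a q w = 1 * a q e + 1 * a q r" unfolding w_eq by (rule alin2[OF eV rV qV])
      also have "\<dots> = 1 * f e + 1 * f r" using aqe aqs r(1) by simp
      also have "\<dots> = f w" unfolding w_eq by (rule flin[symmetric, OF eV rV])
      finally show ?thesis .
    qed
    have "a q x = f x" if xin: "x \<in> lspan (w # ws)" for x
    proof -
      obtain t s where x0: "x = (\<lambda>z. t * w z + s z)" "s \<in> lspan ws"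
        using xin by auto
      then have x: "x = (\<lambda>z. t * w z + 1 * s z)" "s \<in> lspan ws" by auto
      have sV: "s \<in> V" using x WV by auto
      have "a q x = t * a q w + 1 * a q s" unfolding x(1) by (rule alin2[OF wV sV qV])
      also have "\<dots> = t * f w + 1 * f s" using aqw aqs x(2) by simp
      also have "\<dots> = f x" unfolding x(1) by (rule flin[symmetric, OF wV sV])
      finally show ?thesis .
    qed
    then show ?thesis using qin by blast
  qed
qed



lemma lspan_sumlist:
  "(\<lambda>z. sum_list (map (\<lambda>p. c p * g p z) xs)) \<in> lspan (map g xs)"
proof (induction xs)
  case Nil
  then show ?case by simp
next
  case (Cons x xs)
  then show ?case by (auto intro!: exI[of _ "c x"])
qed

lemma PP_in_lspan:
  assumes "set xs = Dn m" "distinct xs" "u \<in> PP m"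
  shows "u \<in> lspan (map mon xs)"
proof -
  obtain c where c: "\<And>z. u z = (\<Sum>p\<in>Dn m. c p * mon p z)"
    using assms unfolding PP_def by blast
  have "u = (\<lambda>z. sum_list (map (\<lambda>p. c p * mon p z) xs))"
    using assms(1,2) by (auto simp: c sum_list_distinct_conv_sum_set)
  then show ?thesis using lspan_sumlist by metis
qed

lemma PP_div:
  assumes "u \<in> PP n" "sig \<in> PP 1"
  shows "\<exists>R\<in>PP (n-1). \<forall>z. u z = u (sig z, snd z) + (fst z - sig z) * R z"
proof -
  obtain c where c: "\<And>z. u z = (\<Sum>p\<in>Dn n. c p * mon p z)"
    using assms unfolding PP_def by blast
  define R where "R z = (\<Sum>p\<in>Dn n. \<Sum>k<fst p. c p * (sig z ^ (fst p - Suc k) * fst z ^ k) * snd z ^ snd p)" for z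
  have "R \<in> PP (n-1)"
    unfolding R_def[abs_def]
  proof (intro PP_sum)
    fix p k assume p: "p \<in> Dn n" and k: "k \<in> {..<fst p}"
    have "(\<lambda>z. sig z ^ (fst p - Suc k) * fst z ^ k * snd z ^ snd p) \<in> PP (1 * (fst p - Suc k) + 1 * k + 1 * snd p)"
      by (intro PP_mult PP_pow PP_fst PP_snd assms(2))
    then have h: "(\<lambda>z. sig z ^ (fst p - Suc k) * fst z ^ k * snd z ^ snd p) \<in> PP (n-1)"
      by (rule PP_mono) (use p k in \<open>auto simp: Dn_def\<close>)
    show "(\<lambda>z. c p * (sig z ^ (fst p - Suc k) * fst z ^ k) * snd z ^ snd p) \<in> PP (n - 1)"
      using PP_lin[OF h PP_const, of "c p" 0 0] by (simp add: mult.assoc)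
  qed auto
  moreover have "u z = u (sig z, snd z) + (fst z - sig z) * R z" for z
  proof -
    have e: "fst z ^ i = sig z ^ i + (fst z - sig z) * (\<Sum>k<i. sig z ^ (i - Suc k) * fst z ^ k)" for i
      using power_diff_sumr2[of "fst z" i "sig z"] by simp
    have "u z = (\<Sum>p\<in>Dn n. c p * (sig z ^ fst p + (fst z - sig z) * (\<Sum>k<fst p. sig z ^ (fst p - Suc k) * fst z ^ k)) * snd z ^ snd p)"
      unfolding c mon_def by (intro sum.cong refl, subst e[of "fst _"]) (simp add: mult.assoc)
    also have "\<dots> = (\<Sum>p\<in>Dn n. c p * sig z ^ fst p * snd z ^ snd p) + (\<Sum>p\<in>Dn n. (fst z - sig z) * (\<Sum>k<fst p. c p * (sig z ^ (fst p - Suc k) * fst z ^ k) * snd z ^ snd p))"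
      unfolding sum.distrib[symmetric]
      by (intro sum.cong refl) (simp add: sum_distrib_left sum_distrib_right distrib_left distrib_right mult.assoc mult.left_commute)
    also have "\<dots> = u (sig z, snd z) + (fst z - sig z) * R z"
      unfolding c mon_def R_def by (simp add: sum_distrib_left mult.assoc)
    finally show ?thesis .
  qed
  ultimately show ?thesis by blast
qed



fun ell :: "edge \<Rightarrow> real \<times> real \<Rightarrow> real" where
  "ell EI z = snd z"
| "ell EII z = fst z"
| "ell EIII z = fst z + snd z - 1"

fun sgn_e :: "edge \<Rightarrow> real" where
  "sgn_e EI = 1" | "sgn_e EII = 1" | "sgn_e EIII = -1"

lemma PP_neg1: "(\<lambda>z. 1 - fst z) \<in> PP 1"
  using PP_lin[OF PP_const PP_fst, of 1 1 "-1"] by simp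

lemma ell_PP: "ell Z \<in> PP 1"
proof (cases Z)
  case EIII
  have "(\<lambda>z. 1 * fst z + 1 * (1 * snd z + 1 * (-1))) \<in> PP 1"
    using PP_lin[OF PP_fst PP_lin[OF PP_snd PP_const, of 1 1 "-1"], of 1 1] .
  moreover have "(\<lambda>z. 1 * fst z + 1 * (1 * snd z + 1 * (-1))) = ell Z"
    using EIII by (auto simp: algebra_simps)
  ultimately show ?thesis by simp
next
  case EI
  then have "ell Z = snd" by auto
  then show ?thesis using PP_snd by simp
next
  case EII
  then have "ell Z = fst" by auto
  then show ?thesis using PP_fst by simp
qed

lemma restr_PP:
  assumes "u \<in> PP n"
  shows "(\<lambda>z. restr Z u (fst z)) \<in> PP n"
proof (cases Z)
  case EI
  then show ?thesis using PP_subst[OF assms PP_fst PP_const] by simp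
next
  case EII
  then show ?thesis using PP_subst[OF assms PP_const PP_fst] by simp
next
  case EIII
  then show ?thesis using PP_subst[OF assms PP_neg1 PP_fst] by simp
qed

lemma restr_zero:
  assumes "u \<in> PP n" "\<forall>t\<in>{0..1}. restr Z u t = 0"
  shows "restr Z u t = 0"
  using PP_edge_zero[OF restr_PP[OF assms(1), of Z], of t] assms(2) by simp

lemma PP_factor:
  assumes "d \<in> PP n" "\<And>t. restr Z d t = 0"
  shows "\<exists>R\<in>PP (n-1). \<forall>z. d z = ell Z z * R z"
proof (cases Z)
  case EI
  let ?d' = "\<lambda>z. d (snd z, fst z)"
  have "?d' \<in> PP n" using PP_subst[OF assms(1) PP_snd PP_fst] by simp
  then obtain R where R: "R \<in> PP (n-1)" "\<forall>z. ?d' z = ?d' (0, snd z) + (fst z - 0) * R z"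
    using PP_div[OF _ PP_const] by blast
  have h1: "\<forall>z. d z = ell Z z * R (snd z, fst z)"
  proof
    fix z
    show "d z = ell Z z * R (snd z, fst z)"
      using R(2)[rule_format, of "(snd z, fst z)"] assms(2)[of "fst z"] EI by simp
  qed
  have h2: "(\<lambda>z. R (snd z, fst z)) \<in> PP (n-1)" using PP_subst[OF R(1) PP_snd PP_fst] by simp
  show ?thesis by (rule bexI[OF _ h2]) (use h1 in simp)
next
  case EII
  obtain R where R: "R \<in> PP (n-1)" "\<forall>z. d z = d (0, snd z) + (fst z - 0) * R z"
    using PP_div[OF assms(1) PP_const] by blast
  have "d z = ell Z z * R z" for z
    using R(2)[rule_format, of z] assms(2)[of "snd z"] EII by simp
  then show ?thesis using R(1) by blast
next
  case EIII
  obtain R where R: "R \<in> PP (n-1)" "\<forall>z. d z = d (1 - snd z, snd z) + (fst z - (1 - snd z)) * R z"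
    using PP_div[OF assms(1), of "\<lambda>z. 1 - snd z"] PP_lin[OF PP_const PP_snd, of 1 1 "-1"] by auto
  have "d z = ell Z z * R z" for z
    using R(2)[rule_format, of z] assms(2)[of "snd z"] EIII by (simp add: algebra_simps)
  then show ?thesis using R(1) by blast
qed



lemma int_lin:
  fixes F G :: "real \<times> real \<Rightarrow> real"
  assumes "continuous_on UNIV F" "continuous_on UNIV G"
  shows "integral Tref (\<lambda>z. \<alpha> * F z + \<beta> * G z) = \<alpha> * integral Tref F + \<beta> * integral Tref G"
proof -
  have iF: "F integrable_on Tref" and iG: "G integrable_on Tref"
    using int_Tref continuous_on_subset[OF assms(1)] continuous_on_subset[OF assms(2)] by blast+
  have "integral Tref (\<lambda>z. \<alpha> * F z + \<beta> * G z) = integral Tref (\<lambda>z. \<alpha> * F z) + integral Tref (\<lambda>z. \<beta> * G z)"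
    by (rule integral_add) (use integrable_cmul[OF iF, of \<alpha>] integrable_cmul[OF iG, of \<beta>] in auto)
  then show ?thesis by simp
qed

lemma ell_nonneg: "z \<in> Tref \<Longrightarrow> 0 \<le> sgn_e Z * ell Z z"
  by (cases Z) (auto simp: Tref_def)

lemma ell_ne0: "0 < x \<Longrightarrow> x < 1/2 \<Longrightarrow> 0 < y \<Longrightarrow> y < 1/2 \<Longrightarrow> ell Z (x, y) \<noteq> 0"
  by (cases Z) auto

lemma sgn_e_ne0: "sgn_e Z \<noteq> 0"
  by (cases Z) auto

lemma PP_pos_zero:
  assumes R: "R \<in> PP m" and i0: "integral Tref (\<lambda>z. ell Z z * R z * R z) = 0"
  shows "R = (\<lambda>z. 0)"
proof -
  have cR: "continuous_on UNIV R" using PP_cont[OF R] .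
  have cE: "continuous_on UNIV (ell Z)" using PP_cont[OF ell_PP] .
  let ?f = "\<lambda>z. sgn_e Z * (ell Z z * R z * R z)"
  have cf: "continuous_on UNIV ?f"
    by (intro continuous_on_mult continuous_on_const cR cE)
  have nn: "0 \<le> ?f z" if "z \<in> Tref" for z
  proof -
    have "?f z = (sgn_e Z * ell Z z) * (R z * R z)" by (simp add: mult_ac)
    then show ?thesis using ell_nonneg[OF that, of Z] by (metis mult_nonneg_nonneg zero_le_square)
  qed
  have "integral Tref ?f = 0" using i0 by simp
  then have box0: "R (x, y) = 0" if "0 < x" "x < 1/2" "0 < y" "y < 1/2" for x y
    using pos_zero[OF cf nn _ that] ell_ne0[OF that, of Z] sgn_e_ne0[of Z] by auto
  show ?thesis
    by (rule ext) (rule PP_box_zero[OF R box0])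
qed

lemma PP0: "u \<in> PP 0 \<Longrightarrow> u = (\<lambda>z. u (0,0))"
proof -
  assume "u \<in> PP 0"
  then obtain c where c: "\<And>z. u z = (\<Sum>p\<in>Dn 0. c p * mon p z)" unfolding PP_def by blast
  have D: "Dn 0 = {(0,0)}" by (auto simp: Dn_def)
  show ?thesis by (rule ext) (simp add: c D mon_def)
qed

lemma restr_const: "restr Z (\<lambda>z. k) t = k"
  by (cases Z) auto

lemma restr_lin: "restr Z (\<lambda>z. \<alpha> * f z + \<beta> * g z) t = \<alpha> * restr Z f t + \<beta> * restr Z g t"
  by (cases Z) auto

lemma polys1_PP:
  assumes "v \<in> polys1 n"
  shows "(\<lambda>z. v (fst z)) \<in> PP n" "(\<lambda>z. v (snd z)) \<in> PP n"
proof -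
  obtain a where a: "\<And>t. v t = (\<Sum>k\<le>n. a k * t ^ k)" using assms unfolding polys1_def by blast
  have "(\<lambda>z. \<Sum>k\<in>{..n}. a k * fst z ^ k) \<in> PP n"
  proof (rule PP_sum)
    fix k assume k: "k \<in> {..n}"
    have "(\<lambda>z. fst z ^ k) \<in> PP n" using PP_mono[OF PP_pow[OF PP_fst, of k]] k by simp
    then show "(\<lambda>z. a k * fst z ^ k) \<in> PP n" using PP_lin[OF _ PP_const, of _ n "a k" 0 0] by simp
  qed simp
  then show h: "(\<lambda>z. v (fst z)) \<in> PP n" by (simp add: a)
  show "(\<lambda>z. v (snd z)) \<in> PP n" using PP_subst[OF h PP_snd PP_fst] by simp
qed

lemma orth_Suc: "n \<noteq> 0 \<Longrightarrow> orth_polys n = {u \<in> PP n. \<forall>w \<in> PP (n - 1). integral Tref (\<lambda>p. u p * w p) = 0}"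
  by (simp add: orth_polys_def polys2_PP)

lemma uniq:
  assumes u1: "u1 \<in> orth_polys n" and u2: "u2 \<in> orth_polys n"
    and e: "\<forall>t\<in>{0..1}. restr Z u1 t = restr Z u2 t"
  shows "u1 = u2"
proof (cases "n = 0")
  case True
  then have "u1 \<in> PP 0" "u2 \<in> PP 0" using u1 u2 by (auto simp: orth_polys_def polys2_PP)
  then have "u1 = (\<lambda>z. u1 (0,0))" "u2 = (\<lambda>z. u2 (0,0))" using PP0 by blast+
  moreover have "restr Z (\<lambda>z. u1 (0,0)) 0 = restr Z (\<lambda>z. u2 (0,0)) 0"
    using e calculation by (metis atLeastAtMost_iff order_refl zero_le_one)
  ultimately show ?thesis by (metis restr_const)
next
  case False
  have P1: "u1 \<in> PP n" and O1: "\<forall>w \<in> PP (n - 1). integral Tref (\<lambda>p. u1 p * w p) = 0"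
    and P2: "u2 \<in> PP n" and O2: "\<forall>w \<in> PP (n - 1). integral Tref (\<lambda>p. u2 p * w p) = 0"
    using u1 u2 orth_Suc[OF False] by auto
  define d where "d = (\<lambda>z. 1 * u1 z + (-1) * u2 z)"
  have dP: "d \<in> PP n" unfolding d_def by (rule PP_lin[OF P1 P2])
  have "\<forall>t\<in>{0..1}. restr Z d t = 0" using e unfolding d_def restr_lin by simp
  then have "\<And>t. restr Z d t = 0" using restr_zero[OF dP] by blast
  then obtain R where R: "R \<in> PP (n-1)" "\<forall>z. d z = ell Z z * R z" using PP_factor[OF dP] by blast
  have cR: "continuous_on UNIV R" using PP_cont[OF R(1)] .
  have "integral Tref (\<lambda>z. 1 * (u1 z * R z) + (-1) * (u2 z * R z)) = 1 * integral Tref (\<lambda>z. u1 z * R z) + (-1) * integral Tref (\<lambda>z. u2 z * R z)"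
    by (rule int_lin) (intro continuous_on_mult PP_cont[OF P1] PP_cont[OF P2] cR)+
  also have "\<dots> = 0" using O1 O2 R(1) by simp
  finally have "integral Tref (\<lambda>z. d z * R z) = 0" by (simp add: d_def algebra_simps)
  then have "integral Tref (\<lambda>z. ell Z z * R z * R z) = 0" using R(2) by simp
  then have "R = (\<lambda>z. 0)" using PP_pos_zero[OF R(1)] by blast
  then have "d z = 0" for z using R(2)[rule_format, of z] by simp
  then show ?thesis by (intro ext) (simp add: d_def)
qed



lemma exist:
  assumes v: "v \<in> polys1 n"
  shows "\<exists>u. u \<in> orth_polys n \<and> (\<forall>t\<in>{0..1}. v t = restr Z u t)"
proof -
  define p where "p = (case Z of EI \<Rightarrow> (\<lambda>z. v (fst z)) | _ \<Rightarrow> (\<lambda>z. v (snd z)))"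
  have pP: "p \<in> PP n" using polys1_PP[OF v] by (cases Z) (auto simp: p_def)
  have pr: "restr Z p t = v t" for t by (cases Z) (auto simp: p_def)
  show ?thesis
  proof (cases "n = 0")
    case True
    then have "p \<in> orth_polys n" using pP by (simp add: orth_polys_def polys2_PP)
    then show ?thesis using pr by (intro exI[of _ p]) simp
  next
    case False
    let ?V = "PP (n-1)"
    define a where "a g k = integral Tref (\<lambda>z. ell Z z * g z * k z)" for g k
    define f where "f g = integral Tref (\<lambda>z. p z * g z)" for g
    obtain xs where xs: "set xs = Dn (n-1)" "distinct xs" using finite_distinct_list[OF finite_Dn] by blast
    have cE: "continuous_on UNIV (ell Z)" using PP_cont[OF ell_PP] .
    have cp: "continuous_on UNIV p" using PP_cont[OF pP] .
    have V0: "(\<lambda>z. 0) \<in> ?V" by (rule PP_const)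
    have Vlin: "\<And>g h \<alpha> \<beta>. g\<in>?V \<Longrightarrow> h\<in>?V \<Longrightarrow> (\<lambda>z. \<alpha> * g z + \<beta> * h z) \<in> ?V"
      by (rule PP_lin)
    have alin: "a (\<lambda>z. \<alpha> * g z + \<beta> * h z) k = \<alpha> * a g k + \<beta> * a h k"
      if "g\<in>?V" "h\<in>?V" "k\<in>?V" for g h k \<alpha> \<beta>
    proof -
      have cg: "continuous_on UNIV g" "continuous_on UNIV h" "continuous_on UNIV k"
        using PP_cont that by blast+
      have "(\<lambda>z. ell Z z * (\<alpha> * g z + \<beta> * h z) * k z) = (\<lambda>z. \<alpha> * (ell Z z * g z * k z) + \<beta> * (ell Z z * h z * k z))"
        by (rule ext) (simp add: algebra_simps)
      then show ?thesis unfolding a_def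
        by (simp only:) (rule int_lin; intro continuous_on_mult cE cg)
    qed
    have asym: "a g k = a k g" for g k unfolding a_def by (simp add: mult_ac)
    have apos: "g = (\<lambda>z. 0)" if "g\<in>?V" "a g g = 0" for g
      using PP_pos_zero[OF that(1)] that(2) unfolding a_def by blast
    have flin: "f (\<lambda>z. \<alpha> * g z + \<beta> * h z) = \<alpha> * f g + \<beta> * f h"
      if "g\<in>?V" "h\<in>?V" for g h \<alpha> \<beta>
    proof -
      have cg: "continuous_on UNIV g" "continuous_on UNIV h"
        using PP_cont that by blast+
      have "(\<lambda>z. p z * (\<alpha> * g z + \<beta> * h z)) = (\<lambda>z. \<alpha> * (p z * g z) + \<beta> * (p z * h z))"
        by (rule ext) (simp add: algebra_simps)
      then show ?thesis unfolding f_def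
        by (simp only:) (rule int_lin; intro continuous_on_mult cp cg)
    qed
    have wsV: "set (map mon xs) \<subseteq> ?V"
    proof
      fix w assume "w \<in> set (map mon xs)"
      then obtain pq where "pq \<in> Dn (n-1)" "w = mon pq" using xs by auto
      then show "w \<in> ?V" using PP_mono[OF PP_mon[of pq]] by (auto simp: Dn_def)
    qed
    obtain q where q: "q \<in> lspan (map mon xs)" "\<forall>w\<in>lspan (map mon xs). a q w = f w"
      using riesz[of ?V a "map mon xs" f, OF V0 Vlin alin asym apos wsV flin] by blast
    have qV: "q \<in> ?V" using lspan_sub[OF V0 Vlin wsV] q(1) by blast
    define u where "u = (\<lambda>z. 1 * p z + (-1) * (ell Z z * q z))"
    have "(\<lambda>z. ell Z z * q z) \<in> PP (1 + (n-1))" by (rule PP_mult[OF ell_PP qV])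
    then have eqP: "(\<lambda>z. ell Z z * q z) \<in> PP n" using False by simp
    have uP: "u \<in> PP n" unfolding u_def by (rule PP_lin[OF pP eqP])
    have orth: "integral Tref (\<lambda>z. u z * w z) = 0" if w: "w \<in> ?V" for w
    proof -
      have cw: "continuous_on UNIV w" "continuous_on UNIV q" using PP_cont w qV by blast+
      have "(\<lambda>z. u z * w z) = (\<lambda>z. 1 * (p z * w z) + (-1) * (ell Z z * q z * w z))"
        by (rule ext) (simp add: u_def algebra_simps)
      then have "integral Tref (\<lambda>z. u z * w z) = 1 * f w + (-1) * a q w"
        unfolding a_def f_def by (simp only:) (rule int_lin; intro continuous_on_mult cp cw cE)
      moreover have "a q w = f w" using q(2) PP_in_lspan[OF xs w] by blast
      ultimately show ?thesis by simp
    qed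
    have "u \<in> orth_polys n" using uP orth orth_Suc[OF False] by auto
    moreover have "v t = restr Z u t" for t
    proof -
      have "restr Z u t = restr Z p t" by (cases Z) (simp_all add: u_def)
      then show ?thesis using pr[of t] by simp
    qed
    ultimately show ?thesis by blast
  qed
qed

theorem lemma13:
  fixes n :: nat and v :: "real \<Rightarrow> real" and Z :: edge
  assumes "v \<in> polys1 n"
  shows "\<exists>!u. u \<in> orth_polys n \<and> (\<forall>t\<in>{0..1}. v t = restr Z u t)"
proof -
  obtain u where u: "u \<in> orth_polys n" "\<forall>t\<in>{0..1}. v t = restr Z u t"
    using exist[OF assms] by blast
  show ?thesis
  proof (rule ex1I[of _ u])
    show "u \<in> orth_polys n \<and> (\<forall>t\<in>{0..1}. v t = restr Z u t)" using u by blast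
    fix u' assume h: "u' \<in> orth_polys n \<and> (\<forall>t\<in>{0..1}. v t = restr Z u' t)"
    then have "\<forall>t\<in>{0..1}. restr Z u' t = restr Z u t" using u(2) by simp
    then show "u' = u" using uniq[of u' n u Z] u(1) h by blast
  qed
qed

end
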